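(* Let $\rho:\mathbb{R}\to\mathbb{R}$ be differentiable, applied element-wise to vectors. Let $D=\{u\in\mathbb{R}:\rho'(u)\neq 0\}$ and define $\varsigma:D\to\mathbb{R}$, $\varsigma(u)=u/\rho'(u)$ (applied element-wise to vectors, i.e. $\varsigma(\vec{s})=\vec{s}\oslash\rho'(\vec{s})$ with $\oslash$ the Hadamard division), and assume $\varsigma$ is a bijection from $D$ onto $\mathbb{R}$; set $\rho_\varsigma:=\rho\circ\varsigma^{-1}:\mathbb{R}\to\mathbb{R}$. Let $\vec{W}\in\mathbb{R}^{N\times N}$, $\vec{b}\in\mathbb{R}^N$, $\vec{U}\in\mathbb{R}^{N\times d}$ be such that the CHN defined by these data is well-behaved, and let $\vec{x}\in\mathbb{R}^d$ be an input all of whose entries lie in $D$. Let $\vec{s}^*\in\mathbb{R}^N$ be the equilibrium of the CHN, i.e. the unique solution of $\vec{s}^*=\rho'(\vec{s}^* )\odot(\vec{W}\rho(\vec{s}^* )+\vec{b}+\vec{U}\rho(\vec{x}))$. Then all entries of $\vec{s}^*$ lie in $D$, and $\vec{s}^*_\varsigma:=\varsigma(\vec{s}^* )$ satisfies the HAM equilibrium equation with non-linearity $\rho_\varsigma$ and preprocessed input $\varsigma(\vec{x})$: $\vec{s}^*_\varsigma=\vec{W}\rho_\varsigma(\vec{s}^*_\varsigma)+\vec{b}+\vec{U}\rho_\varsigma(\varsigma(\vec{x}))$; conversely, $\vec{s}^*=\varsigma^{-1}(\vec{s}^*_\varsigma)$.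
   Context: A CHN (continuous Hopfield network) with element-wise non-linearity $\rho$ and parameters $\vec{W},\vec{b},\vec{U}$ assigns to an input $\vec{x}\in\mathbb{R}^d$ its equilibrium state(s), the solutions $\vec{s}^*\in\mathbb{R}^N$ of $\vec{s}^*=\rho'(\vec{s}^* )\odot(\vec{W}\rho(\vec{s}^* )+\vec{b}+\vec{U}\rho(\vec{x}))$, where $\odot$ is the Hadamard product. The CHN is called well-behaved if for every input $\vec{x}$ this equation has exactly one solution $\vec{s}^*$ and this solution is not identically zero. A HAM with non-linearity $\sigma$ has equilibrium equation $\vec{s}^*=\vec{W}\sigma(\vec{s}^* )+\vec{b}+\vec{U}\sigma(\vec{x})$. *)

theory Defs
  imports "HOL-Analysis.Analysis"
begin

definition vmap :: "(real \<Rightarrow> real) \<Rightarrow> real^'n \<Rightarrow> real^'n" where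
  "vmap f v = (\<chi> i. f (v $ i))"

definition hadamard :: "real^'n \<Rightarrow> real^'n \<Rightarrow> real^'n" where
  "hadamard u v = (\<chi> i. u $ i * v $ i)"

definition chn_equilibrium ::
  "(real \<Rightarrow> real) \<Rightarrow> real^'n^'n \<Rightarrow> real^'n \<Rightarrow> real^'d^'n \<Rightarrow> real^'d \<Rightarrow> real^'n \<Rightarrow> bool" where
  "chn_equilibrium \<rho> W b U x s \<longleftrightarrow>
     s = hadamard (vmap (deriv \<rho>) s) (W *v vmap \<rho> s + b + U *v vmap \<rho> x)"

definition chn_well_behaved ::
  "(real \<Rightarrow> real) \<Rightarrow> real^'n^'n \<Rightarrow> real^'n \<Rightarrow> real^'d^'n \<Rightarrow> bool" where
  "chn_well_behaved \<rho> W b U \<longleftrightarrow>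
     (\<forall>x::real^'d. (\<exists>!s. chn_equilibrium \<rho> W b U x s) \<and>
                    (\<forall>s. chn_equilibrium \<rho> W b U x s \<longrightarrow> s \<noteq> 0))"

definition ham_equilibrium ::
  "(real \<Rightarrow> real) \<Rightarrow> real^'n^'n \<Rightarrow> real^'n \<Rightarrow> real^'d^'n \<Rightarrow> real^'d \<Rightarrow> real^'n \<Rightarrow> bool" where
  "ham_equilibrium \<sigma> W b U x s \<longleftrightarrow> s = W *v vmap \<sigma> s + b + U *v vmap \<sigma> x"

end

theory Submission
  imports Defs
begin

theorem theorem2:
  fixes \<rho> :: "real \<Rightarrow> real"
    and W :: "real^'n^'n" and b :: "real^'n" and U :: "real^'d^'n"
    and x :: "real^'d" and s :: "real^'n"
    and D :: "real set" and vs :: "real \<Rightarrow> real"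
  assumes diff: "\<And>u. \<rho> differentiable (at u)"
    and D_eq: "D = {u. deriv \<rho> u \<noteq> 0}"
    and vs_eq: "\<And>u. vs u = u / deriv \<rho> u"
    and bij: "bij_betw vs D UNIV"
    and wb: "chn_well_behaved \<rho> W b U"
    and xD: "\<forall>i. x $ i \<in> D"
    and eq: "chn_equilibrium \<rho> W b U x s"
  shows "(\<forall>i. s $ i \<in> D)
       \<and> ham_equilibrium (\<rho> \<circ> inv_into D vs) W b U (vmap vs x) (vmap vs s)
       \<and> s = vmap (inv_into D vs) (vmap vs s)"
proof -
  define A where "A = W *v vmap \<rho> s + b + U *v vmap \<rho> x"
  have sA: "\<And>i. s $ i = deriv \<rho> (s $ i) * A $ i"
    using eq unfolding chn_equilibrium_def A_def hadamard_def vmap_def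
    by (metis (no_types, lifting) vec_lambda_beta)
  have "(0::real) \<in> vs ` D" using bij by (simp add: bij_betw_def)
  then obtain u where u: "u \<in> D" "vs u = 0" by auto
  have "u = 0" using u D_eq vs_eq[of u] by auto
  hence D0: "0 \<in> D" using u by simp
  have sD: "\<forall>i. s $ i \<in> D"
  proof
    fix i
    show "s $ i \<in> D"
    proof (rule ccontr)
      assume "s $ i \<notin> D"
      hence "deriv \<rho> (s $ i) = 0" using D_eq by auto
      hence "s $ i = 0" using sA[of i] by simp
      thus False using D0 \<open>s $ i \<notin> D\<close> by simp
    qed
  qed
  have inj: "inj_on vs D" using bij by (simp add: bij_betw_def)
  have invs: "\<And>i. inv_into D vs (vs (s $ i)) = s $ i"
    using sD inj by (simp add: inv_into_f_f)
  have invx: "\<And>i. inv_into D vs (vs (x $ i)) = x $ i"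
    using xD inj by (simp add: inv_into_f_f)
  have r1: "vmap (\<rho> \<circ> inv_into D vs) (vmap vs s) = vmap \<rho> s"
    by (simp add: vmap_def invs)
  have r2: "vmap (\<rho> \<circ> inv_into D vs) (vmap vs x) = vmap \<rho> x"
    by (simp add: vmap_def invx)
  have vsA: "vmap vs s = A"
  proof -
    have "\<And>i. vs (s $ i) = A $ i"
    proof -
      fix i
      have "deriv \<rho> (s $ i) \<noteq> 0" using sD D_eq by auto
      thus "vs (s $ i) = A $ i" using sA[of i] vs_eq[of "s $ i"] by (metis nonzero_mult_div_cancel_left)
    qed
    thus ?thesis by (simp add: vmap_def vec_eq_iff)
  qed
  have ham: "ham_equilibrium (\<rho> \<circ> inv_into D vs) W b U (vmap vs x) (vmap vs s)"
    unfolding ham_equilibrium_def r1 r2 using vsA A_def by simp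
  have "s = vmap (inv_into D vs) (vmap vs s)"
    by (simp add: vmap_def invs vec_eq_iff)
  with sD ham show ?thesis by blast
qed

end
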